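(* Let $2/5 < r < 1$, put $p = \left\lceil \frac{5r-2}{1-r} \right\rceil$ and $\alpha = p - \frac{5r-2}{1-r}$, and let $\alpha = (0.\alpha_1 \alpha_2 \cdots)_2$ be the binary expansion of $\alpha$ with infinitely many zero digits. Define binary words $w^{\langle 0 \rangle} = \emptyset$ and $w^{\langle i \rangle} = w^{\langle i-1 \rangle} w^{\langle i-1 \rangle}\, 01011\, 0^{p - \alpha_i}$ for $i \geq 1$; each $w^{\langle i \rangle}$ is a proper prefix of $w^{\langle i+1 \rangle}$, and let $w$ be the infinite binary word which is the limit of this sequence. Then $\lim_{n \to \infty} |Z(w^{(n)})|/n = r$.
   Context: For a binary word $x$, $x^j$ denotes $j$ concatenated copies of $x$ ($x^0$ is empty), and juxtaposition denotes concatenation. $w^{(n)}$ denotes the initial subword of length $n$ of $w$, and $Z(u)$ is the set of indices $i$ with $u_i = 0$. *)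

theory Defs
  imports Complex_Main
begin

definition pval :: "real \<Rightarrow> nat" where
  "pval r = nat \<lceil>(5*r - 2) / (1 - r)\<rceil>"

definition alphaval :: "real \<Rightarrow> real" where
  "alphaval r = real (pval r) - (5*r - 2) / (1 - r)"

text \<open>i-th binary digit (i \<ge> 1) of x \<in> [0,1): the expansion with infinitely many zeros.\<close>
definition bdigit :: "real \<Rightarrow> nat \<Rightarrow> nat" where
  "bdigit x i = nat (\<lfloor>2 ^ i * x\<rfloor> mod 2)"

fun wblock :: "real \<Rightarrow> nat \<Rightarrow> nat list" where
  "wblock r 0 = []"
| "wblock r (Suc i) = wblock r i @ wblock r i @ [0,1,0,1,1]
      @ replicate (pval r - bdigit (alphaval r) (Suc i)) 0"

definition zcount :: "(nat \<Rightarrow> nat) \<Rightarrow> nat \<Rightarrow> nat" where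
  "zcount w n = card {i. i < n \<and> w i = 0}"

end

theory Submission
  imports Defs "HOL-Analysis.Analysis" "HOL-Real_Asymp.Real_Asymp"
begin

definition Zc :: "nat list \<Rightarrow> real" where
  "Zc xs = real (length (filter (\<lambda>x. x = 0) xs))"

lemma Zc_append[simp]: "Zc (xs @ ys) = Zc xs + Zc ys"
  by (simp add: Zc_def)

lemma Zc_le: "Zc xs \<le> real (length xs)" "0 \<le> Zc xs"
  by (auto simp: Zc_def)

lemma floor_double: "\<lfloor>2 * (y::real)\<rfloor> = 2 * \<lfloor>y\<rfloor> + \<lfloor>2 * y\<rfloor> mod 2"
proof -
  have a: "of_int \<lfloor>y\<rfloor> \<le> y" "y < of_int \<lfloor>y\<rfloor> + 1" by linarith+
  have "\<lfloor>2*y\<rfloor> = 2 * \<lfloor>y\<rfloor> \<or> \<lfloor>2*y\<rfloor> = 2 * \<lfloor>y\<rfloor> + 1"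
    using a by linarith
  then show ?thesis by auto
qed

lemma bdigit_le: "bdigit x i \<le> 1"
  unfolding bdigit_def by (simp add: nat_le_iff) 

lemma pval_ge: assumes "2/5 < r" "r < 1" shows "1 \<le> pval r"
proof -
  have "0 < (5*r - 2) / (1 - r)" using assms by (simp add: field_simps)
  then have "1 \<le> \<lceil>(5*r - 2) / (1 - r)\<rceil>" by (simp add: zero_less_ceiling one_le_ceiling)
  then show ?thesis unfolding pval_def by linarith
qed

lemma pval_real: assumes "2/5 < r" "r < 1"
  shows "real (pval r) = of_int \<lceil>(5*r - 2) / (1 - r)\<rceil>"
proof -
  have "0 < (5*r - 2) / (1 - r)" using assms by (simp add: field_simps)
  then show ?thesis unfolding pval_def by simp
qed

lemma alpha_range: assumes "2/5 < r" "r < 1"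
  shows "0 \<le> alphaval r" "alphaval r < 1"
  unfolding alphaval_def pval_real[OF assms] by linarith+

lemma len_Suc: "length (wblock r (Suc i)) = 2 * length (wblock r i) + 5 + (pval r - bdigit (alphaval r) (Suc i))"
  by simp

lemma len_ge: "2 ^ i \<le> length (wblock r i) + 1"
  by (induction i) auto

lemma E_formula:
  assumes "2/5 < r" "r < 1"
  shows "Zc (wblock r i) - r * real (length (wblock r i)) =
     (1 - r) * (2^i * alphaval r - of_int \<lfloor>2^i * alphaval r\<rfloor> - alphaval r)"
proof (induction i)
  case 0
  have "\<lfloor>alphaval r\<rfloor> = 0" using alpha_range[OF assms] by (simp add: floor_eq_iff)
  then show ?case by (simp add: Zc_def)
next
  case (Suc i)
  define a where "a = alphaval r"
  define b where "b = bdigit a (Suc i)"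
  define p where "p = pval r"
  define F where "F = \<lfloor>2^i * a\<rfloor>"
  have bp: "b \<le> p" using bdigit_le[of a "Suc i"] pval_ge[OF assms] unfolding b_def p_def by linarith
  have Fs: "\<lfloor>2^Suc i * a\<rfloor> = 2 * F + int b"
  proof -
    have "\<lfloor>2^Suc i * a\<rfloor> = \<lfloor>2 * (2^i * a)\<rfloor>" by (simp add: mult.assoc)
    also have "\<dots> = 2 * F + \<lfloor>2 * (2^i * a)\<rfloor> mod 2" unfolding F_def by (rule floor_double)
    also have "\<lfloor>2 * (2^i * a)\<rfloor> mod 2 = int b"
      unfolding b_def bdigit_def by (simp add: mult.assoc)
    finally show ?thesis .
  qed
  have pa: "(1 - r) * real p = (1 - r) * a + 5*r - 2"
    using assms unfolding a_def alphaval_def p_def by (simp add: field_simps)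
  have ZS: "Zc (wblock r (Suc i)) = 2 * Zc (wblock r i) + 2 + (real p - real b)"
    using bp by (simp add: Zc_def p_def b_def a_def of_nat_diff)
  have LS: "real (length (wblock r (Suc i))) = 2 * real (length (wblock r i)) + 5 + (real p - real b)"
    using bp by (simp add: p_def b_def a_def of_nat_diff)
  have IH: "Zc (wblock r i) - r * real (length (wblock r i)) = (1 - r) * (2^i * a - of_int F - a)"
    using Suc unfolding a_def F_def .
  have "Zc (wblock r (Suc i)) - r * real (length (wblock r (Suc i)))
      = 2 * (Zc (wblock r i) - r * real (length (wblock r i))) + (2 - 5*r) + (1-r)*(real p - real b)"
    unfolding ZS LS by (simp add: algebra_simps)
  also have "\<dots> = (1 - r) * (2^Suc i * a - of_int (2 * F + int b) - a)"
    unfolding IH using pa by (simp add: algebra_simps)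
  finally show ?case unfolding Fs[symmetric] a_def .
qed

lemma E_bound:
  assumes "2/5 < r" "r < 1"
  shows "\<bar>Zc (wblock r i) - r * real (length (wblock r i))\<bar> \<le> 1"
proof -
  define a where "a = alphaval r"
  have a: "0 \<le> a" "a < 1" using alpha_range[OF assms] a_def by auto
  have f: "0 \<le> 2^i * a - of_int \<lfloor>2^i * a\<rfloor>" "2^i * a - of_int \<lfloor>2^i * a\<rfloor> < 1" by linarith+
  have "\<bar>2^i * a - of_int \<lfloor>2^i * a\<rfloor> - a\<bar> \<le> 1" using a f by linarith
  moreover have "\<bar>1 - r\<bar> \<le> 1" using assms by auto
  ultimately have "\<bar>(1 - r) * (2^i * a - of_int \<lfloor>2^i * a\<rfloor> - a)\<bar> \<le> 1"
    by (metis abs_mult mult_le_one abs_ge_zero)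
  then show ?thesis using E_formula[OF assms, of i] a_def by simp
qed

lemma prefix_bound:
  assumes "2/5 < r" "r < 1"
  shows "\<forall>n \<le> length (wblock r i). \<bar>Zc (take n (wblock r i)) - r * real n\<bar> \<le> 2 * (6 + real (pval r)) * (real i + 1)"
proof (induction i)
  case 0
  then show ?case by (simp add: Zc_def)
next
  case (Suc i)
  define C where "C = 2 * (6 + real (pval r))"
  have C1: "1 \<le> C" unfolding C_def by simp
  define W where "W = wblock r i"
  define B where "B = [0::nat,1,0,1,1] @ replicate (pval r - bdigit (alphaval r) (Suc i)) 0"
  have WS: "wblock r (Suc i) = W @ W @ B" unfolding W_def B_def by simp
  have LB: "length B \<le> 5 + pval r" unfolding B_def by simp
  have EW: "\<bar>Zc W - r * real (length W)\<bar> \<le> 1" unfolding W_def by (rule E_bound[OF assms])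
  have IH: "\<And>n. n \<le> length W \<Longrightarrow> \<bar>Zc (take n W) - r * real n\<bar> \<le> C * (real i + 1)"
    using Suc unfolding C_def W_def by blast
  have main: "\<forall>n \<le> length (wblock r (Suc i)). \<bar>Zc (take n (wblock r (Suc i))) - r * real n\<bar> \<le> C * (real (Suc i) + 1)"
  proof (intro allI impI)
    fix n assume n: "n \<le> length (wblock r (Suc i))"
    show "\<bar>Zc (take n (wblock r (Suc i))) - r * real n\<bar> \<le> C * (real (Suc i) + 1)"
    proof (cases "n \<le> length W")
      case True
      then have t: "take n (wblock r (Suc i)) = take n W" unfolding WS by simp
      have c: "C * (real i + 1) \<le> C * (real (Suc i) + 1)" using C1 by simp
      have "\<bar>Zc (take n (wblock r (Suc i))) - r * real n\<bar> \<le> C * (real (Suc i) + 1)"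
        unfolding t using IH[OF True] c by linarith
      then show ?thesis .
    next
      case False
      show ?thesis
      proof (cases "n \<le> 2 * length W")
        case True
        define m where "m = n - length W"
        have m: "m \<le> length W" "n = length W + m" using True False unfolding m_def by auto
        have "take n (wblock r (Suc i)) = W @ take m W" unfolding WS using m by simp
        then have "Zc (take n (wblock r (Suc i))) - r * real n
            = (Zc W - r * real (length W)) + (Zc (take m W) - r * real m)"
          using m by (simp add: algebra_simps)
        then have "\<bar>Zc (take n (wblock r (Suc i))) - r * real n\<bar> \<le> 1 + C * (real i + 1)"
          using EW IH[OF m(1)] by linarith
        then show ?thesis using C1 by (simp add: algebra_simps)
      next
        case F2: False
        define m where "m = n - 2 * length W"
        have m: "m \<le> length B" "n = length W + length W + m" using F2 n unfolding m_def WS by auto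
        have "take n (wblock r (Suc i)) = W @ W @ take m B" unfolding WS using m by simp
        then have eq: "Zc (take n (wblock r (Suc i))) - r * real n
            = 2 * (Zc W - r * real (length W)) + (Zc (take m B) - r * real m)"
          using m by (simp add: algebra_simps)
        have "Zc (take m B) \<le> real m" using Zc_le(1)[of "take m B"] m by simp
        moreover have "0 \<le> Zc (take m B)" by (rule Zc_le(2))
        moreover have "real m \<le> 5 + real (pval r)" using m LB by linarith
        moreover have "0 \<le> r * real m" "r * real m \<le> real m" using assms by (auto simp: mult_left_le_one_le)
        ultimately have "\<bar>Zc (take m B) - r * real m\<bar> \<le> 2 * (5 + real (pval r))" using of_nat_0_le_iff[of "pval r", where ?'a=real] by (smt (verit))
        then have "\<bar>Zc (take n (wblock r (Suc i))) - r * real n\<bar> \<le> C"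
          unfolding eq C_def using EW by (smt (verit))
        moreover have "C \<le> C * (real (Suc i) + 1)" using C1 by simp
        ultimately show ?thesis by linarith
      qed
    qed
  qed
  then show ?case unfolding C_def .
qed

theorem lemma4p14:
  fixes r :: real and w :: "nat \<Rightarrow> nat"
  assumes "2/5 < r" and "r < 1"
    and "\<And>i k. k < length (wblock r i) \<Longrightarrow> w k = wblock r i ! k"
  shows "(\<lambda>n. real (zcount w n) / real n) \<longlonglongrightarrow> r"
proof -
  define C where "C = 2 * (6 + real (pval r))"
  have key: "\<bar>real (zcount w n) / real n - r\<bar> \<le> C * (log 2 (real n) + 2) / real n" if n1: "1 \<le> n" for n
  proof -
    have ex: "\<exists>i. n \<le> length (wblock r i)"
    proof
      have "n < 2 ^ n" by simp
      then show "n \<le> length (wblock r n)" using len_ge[of n r] by linarith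
    qed
    define i where "i = (LEAST i. n \<le> length (wblock r i))"
    have ni: "n \<le> length (wblock r i)" unfolding i_def using LeastI_ex[OF ex] .
    have "i \<noteq> 0" using ni n1 by (cases "i = 0") auto
    then obtain j where j: "i = Suc j" by (cases i) auto
    have "\<not> n \<le> length (wblock r j)" using not_less_Least[of j "\<lambda>i. n \<le> length (wblock r i)"] j unfolding i_def by auto
    then have "2 ^ j \<le> n" using len_ge[of j r] by linarith
    then have "real (2 ^ j) \<le> real n" by linarith
    then have "log 2 (2 ^ j) \<le> log 2 (real n)" using n1 by (subst log_le_cancel_iff) auto
    then have jl: "real j \<le> log 2 (real n)" by simp
    have zc: "real (zcount w n) = Zc (take n (wblock r i))"
    proof -
      have "{k. k < n \<and> w k = 0} = {k. k < length (take n (wblock r i)) \<and> take n (wblock r i) ! k = 0}"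
        using ni assms(3)[of _ i] by auto
      then show ?thesis unfolding zcount_def Zc_def by (simp add: length_filter_conv_card)
    qed
    have b: "\<bar>real (zcount w n) - r * real n\<bar> \<le> C * (real i + 1)"
      using prefix_bound[OF assms(1,2), of i] ni zc unfolding C_def by auto
    have C0: "0 \<le> C" unfolding C_def by simp
    have "C * (real i + 1) \<le> C * (log 2 (real n) + 2)" using jl j C0 by (intro mult_left_mono) auto
    with b have b2: "\<bar>real (zcount w n) - r * real n\<bar> \<le> C * (log 2 (real n) + 2)" by linarith
    have "real (zcount w n) / real n - r = (real (zcount w n) - r * real n) / real n"
      using n1 by (simp add: field_simps)
    then have "\<bar>real (zcount w n) / real n - r\<bar> = \<bar>real (zcount w n) - r * real n\<bar> / real n"
      using n1 by simp
    then show ?thesis using b2 n1 by (simp add: divide_right_mono)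
  qed
  have lim0: "(\<lambda>n. C * (log 2 (real n) + 2) / real n) \<longlonglongrightarrow> 0"
    by real_asymp
  have "(\<lambda>n. real (zcount w n) / real n - r) \<longlonglongrightarrow> 0"
  proof (rule Lim_null_comparison[OF _ lim0])
    show "\<forall>\<^sub>F n in sequentially. norm (real (zcount w n) / real n - r) \<le> C * (log 2 (real n) + 2) / real n"
      using eventually_ge_at_top[of "1::nat"] by eventually_elim (use key in auto)
  qed
  then have "(\<lambda>n. (real (zcount w n) / real n - r) + r) \<longlonglongrightarrow> 0 + r"
    by (intro tendsto_add) auto
  then show ?thesis by simp
qed

end
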